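(* Let $X$ be a complex Banach space, $\mathcal{F}$ an algebra with unit, $\mathcal{E}\subseteq\mathcal{F}$ a subalgebra and $\Phi:\mathcal{E}\to\mathcal{L}(X)$ a non-degenerate algebra representation. Then the set $$\mathrm{anc}(\mathcal{E},\mathcal{F},\Phi):=\{f\in\mathcal{F}: \text{for all } e\in\mathcal{E},\ [ef]_{\mathcal{E}} \text{ is a } \Phi\text{-anchor set}\}$$ is a unital subalgebra of $\mathcal{F}$ that contains $\mathcal{E}$ and is anchored in $\mathcal{E}$. Moreover, $\mathrm{anc}(\mathcal{E},\mathcal{F},\Phi)$ contains every unital subalgebra of $\mathcal{F}$ that contains $\mathcal{E}$ and is anchored in $\mathcal{E}$.
   Context: $\mathcal{F}$ need not be commutative; $\mathcal{E}$ need not be unital. An algebra representation is an algebra homomorphism into $\mathcal{L}(X)$. For $f\in\mathcal{F}$, $[f]_{\mathcal{E}}=\{e\in\mathcal{E}:ef\in\mathcal{E}\}$. A subset $\mathcal{M}\subseteq\mathcal{E}$ is a $\Phi$-anchor set if $\mathcal{M}\neq\emptyset$ and $\bigcap_{e\in\mathcal{M}}\ker\Phi(e)=\{0\}$. $f$ is anchored in $\mathcal{E}$ if $[f]_{\mathcal{E}}$ is a $\Phi$-anchor set; a subset of $\mathcal{F}$ is anchored in $\mathcal{E}$ if all its elements are. $\Phi$ is non-degenerate if $\mathcal{E}$ itself is a $\Phi$-anchor set. *)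

theory Defs
  imports "HOL-Analysis.Analysis"
begin

text \<open>Complex scalar structure on a (real) Banach space: a complex vector space
 structure compatible with the real one and with the norm.\<close>
definition complex_banach_scaling :: "(complex \<Rightarrow> 'x::banach \<Rightarrow> 'x) \<Rightarrow> bool" where
  "complex_banach_scaling scX \<longleftrightarrow>
     vector_space scX \<and>
     (\<forall>r x. scX (complex_of_real r) x = r *\<^sub>R x) \<and>
     (\<forall>c x. norm (scX c x) = cmod c * norm x)"

definition complex_algebra_scaling :: "(complex \<Rightarrow> 'f::{ring,monoid_mult} \<Rightarrow> 'f) \<Rightarrow> bool" where
  "complex_algebra_scaling scF \<longleftrightarrow>
     vector_space scF \<and>
     (\<forall>c a b. scF c (a * b) = scF c a * b \<and> scF c (a * b) = a * scF c b)"

definition bounded_operator :: "(complex \<Rightarrow> 'x::banach \<Rightarrow> 'x) \<Rightarrow> ('x \<Rightarrow> 'x) \<Rightarrow> bool" where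
  "bounded_operator scX T \<longleftrightarrow> bounded_linear T \<and> Vector_Spaces.linear scX scX T"

definition subalgebra :: "(complex \<Rightarrow> 'f::{ring,monoid_mult} \<Rightarrow> 'f) \<Rightarrow> 'f set \<Rightarrow> bool" where
  "subalgebra scF A \<longleftrightarrow> 0 \<in> A \<and> (\<forall>a\<in>A. \<forall>b\<in>A. a + b \<in> A \<and> a * b \<in> A) \<and>
     (\<forall>c. \<forall>a\<in>A. scF c a \<in> A)"

definition unital_subalgebra :: "(complex \<Rightarrow> 'f::{ring,monoid_mult} \<Rightarrow> 'f) \<Rightarrow> 'f set \<Rightarrow> bool" where
  "unital_subalgebra scF A \<longleftrightarrow> subalgebra scF A \<and> 1 \<in> A"

text \<open>Algebra representation of the subalgebra E (values of Phi outside E are irrelevant).\<close>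
definition algebra_rep ::
  "(complex \<Rightarrow> 'f::{ring,monoid_mult} \<Rightarrow> 'f) \<Rightarrow> (complex \<Rightarrow> 'x::banach \<Rightarrow> 'x) \<Rightarrow> 'f set \<Rightarrow> ('f \<Rightarrow> 'x \<Rightarrow> 'x) \<Rightarrow> bool" where
  "algebra_rep scF scX E \<Phi> \<longleftrightarrow>
     (\<forall>e\<in>E. bounded_operator scX (\<Phi> e)) \<and>
     (\<forall>a\<in>E. \<forall>b\<in>E. \<Phi> (a + b) = (\<lambda>x. \<Phi> a x + \<Phi> b x)) \<and>
     (\<forall>c. \<forall>a\<in>E. \<Phi> (scF c a) = (\<lambda>x. scX c (\<Phi> a x))) \<and>
     (\<forall>a\<in>E. \<forall>b\<in>E. \<Phi> (a * b) = \<Phi> a \<circ> \<Phi> b)"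

definition bracket :: "'f set \<Rightarrow> 'f::{ring,monoid_mult} \<Rightarrow> 'f set" where
  "bracket E f = {e \<in> E. e * f \<in> E}"

definition anchor_set :: "('f \<Rightarrow> 'x::banach \<Rightarrow> 'x) \<Rightarrow> 'f set \<Rightarrow> 'f set \<Rightarrow> bool" where
  "anchor_set \<Phi> E M \<longleftrightarrow> M \<noteq> {} \<and> M \<subseteq> E \<and> (\<Inter>e\<in>M. {x. \<Phi> e x = 0}) = {0}"

definition anchored :: "('f \<Rightarrow> 'x::banach \<Rightarrow> 'x) \<Rightarrow> 'f set \<Rightarrow> 'f::{ring,monoid_mult} \<Rightarrow> bool" where
  "anchored \<Phi> E f \<longleftrightarrow> anchor_set \<Phi> E (bracket E f)"

definition anchored_set :: "('f \<Rightarrow> 'x::banach \<Rightarrow> 'x) \<Rightarrow> 'f set \<Rightarrow> 'f::{ring,monoid_mult} set \<Rightarrow> bool" where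
  "anchored_set \<Phi> E A \<longleftrightarrow> (\<forall>f\<in>A. anchored \<Phi> E f)"

definition non_degenerate :: "('f \<Rightarrow> 'x::banach \<Rightarrow> 'x) \<Rightarrow> 'f set \<Rightarrow> bool" where
  "non_degenerate \<Phi> E \<longleftrightarrow> anchor_set \<Phi> E E"

definition anc :: "'f::{ring,monoid_mult} set \<Rightarrow> ('f \<Rightarrow> 'x::banach \<Rightarrow> 'x) \<Rightarrow> 'f set" where
  "anc E \<Phi> = {f. \<forall>e\<in>E. anchor_set \<Phi> E (bracket E (e * f))}"

end

theory Submission
  imports Defs
begin

lemma key:
  assumes M: "anchor_set \<Phi> E M"
    and N: "\<And>a. a \<in> M \<Longrightarrow> anchor_set \<Phi> E (N a)"
    and NT: "\<And>a b. a \<in> M \<Longrightarrow> b \<in> N a \<Longrightarrow> b * a \<in> T"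
    and TE: "T \<subseteq> E"
    and mult: "\<And>a b. a \<in> E \<Longrightarrow> b \<in> E \<Longrightarrow> \<Phi> (a * b) = \<Phi> a \<circ> \<Phi> b"
    and z: "\<And>h. h \<in> E \<Longrightarrow> \<Phi> h 0 = 0"
  shows "anchor_set \<Phi> E T"
proof -
  have ME: "M \<subseteq> E" and Mne: "M \<noteq> {}" and Mi: "(\<Inter>e\<in>M. {x. \<Phi> e x = 0}) = {0}"
    using M by (auto simp: anchor_set_def)
  obtain a where a: "a \<in> M" using Mne by blast
  obtain b where "b \<in> N a" using N[OF a] by (auto simp: anchor_set_def)
  hence Tne: "T \<noteq> {}" using NT a by blast
  have "x = 0" if x: "x \<in> (\<Inter>h\<in>T. {x. \<Phi> h x = 0})" for x
  proof -
    have "\<Phi> a x = 0" if a: "a \<in> M" for a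
    proof -
      have NE: "N a \<subseteq> E" and Ni: "(\<Inter>e\<in>N a. {x. \<Phi> e x = 0}) = {0}"
        using N[OF a] by (auto simp: anchor_set_def)
      have "\<Phi> b (\<Phi> a x) = 0" if b: "b \<in> N a" for b
      proof -
        have "\<Phi> (b * a) x = 0" using x NT[OF a b] by blast
        moreover have "\<Phi> (b * a) = \<Phi> b \<circ> \<Phi> a" using mult NE ME a b by blast
        ultimately show ?thesis by simp
      qed
      hence "\<Phi> a x \<in> (\<Inter>e\<in>N a. {x. \<Phi> e x = 0})" by blast
      thus ?thesis using Ni by blast
    qed
    hence "x \<in> (\<Inter>e\<in>M. {x. \<Phi> e x = 0})" by blast
    thus ?thesis using Mi by blast
  qed
  moreover have "0 \<in> (\<Inter>h\<in>T. {x. \<Phi> h x = 0})" using z TE by blast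
  ultimately show ?thesis using Tne TE unfolding anchor_set_def by blast
qed

theorem theorem6p4:
  fixes scX :: "complex \<Rightarrow> 'x::banach \<Rightarrow> 'x"
    and scF :: "complex \<Rightarrow> 'f::{ring,monoid_mult} \<Rightarrow> 'f"
    and E :: "'f set"
    and \<Phi> :: "'f \<Rightarrow> 'x \<Rightarrow> 'x"
  assumes "complex_banach_scaling scX"
    and "complex_algebra_scaling scF"
    and "subalgebra scF E"
    and "algebra_rep scF scX E \<Phi>"
    and "non_degenerate \<Phi> E"
  shows "unital_subalgebra scF (anc E \<Phi>) \<and> E \<subseteq> anc E \<Phi> \<and> anchored_set \<Phi> E (anc E \<Phi>) \<and>
         (\<forall>A. unital_subalgebra scF A \<and> E \<subseteq> A \<and> anchored_set \<Phi> E A \<longrightarrow> A \<subseteq> anc E \<Phi>)"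
proof -
  have vs: "vector_space scF" and scm: "\<And>c a b. scF c (a * b) = a * scF c b"
    using assms(2) unfolding complex_algebra_scaling_def by metis+
  have md: "module scF" using vs by (simp add: vector_space_def module_def)
  have E0: "0 \<in> E" and Eadd: "\<And>a b. a \<in> E \<Longrightarrow> b \<in> E \<Longrightarrow> a + b \<in> E"
    and Emul: "\<And>a b. a \<in> E \<Longrightarrow> b \<in> E \<Longrightarrow> a * b \<in> E"
    and Esc: "\<And>c a. a \<in> E \<Longrightarrow> scF c a \<in> E"
    using assms(3) by (auto simp: subalgebra_def)
  have mult: "\<And>a b. a \<in> E \<Longrightarrow> b \<in> E \<Longrightarrow> \<Phi> (a * b) = \<Phi> a \<circ> \<Phi> b"
    using assms(4) by (auto simp: algebra_rep_def)
  have z: "\<And>h. h \<in> E \<Longrightarrow> \<Phi> h 0 = 0"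
  proof -
    fix h assume "h \<in> E"
    hence "bounded_linear (\<Phi> h)" using assms(4) by (auto simp: algebra_rep_def bounded_operator_def)
    thus "\<Phi> h 0 = 0" by (simp add: linear_simps)
  qed
  have nd: "anchor_set \<Phi> E E" using assms(5) by (simp add: non_degenerate_def)
  have brE: "bracket E g = E" if "g \<in> E" for g
    using that Emul by (auto simp: bracket_def)
  have ancI: "f \<in> anc E \<Phi>" if "\<And>e. e \<in> E \<Longrightarrow> anchor_set \<Phi> E (bracket E (e * f))" for f
    using that by (simp add: anc_def)
  have ancD: "anchor_set \<Phi> E (bracket E (e * f))" if "f \<in> anc E \<Phi>" "e \<in> E" for f e
    using that by (simp add: anc_def)
  have sub: "E \<subseteq> anc E \<Phi>"
    using brE Emul nd by (auto intro!: ancI)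
  have one: "1 \<in> anc E \<Phi>" using brE nd by (auto intro!: ancI)
  have zero: "0 \<in> anc E \<Phi>" using sub E0 by blast
  have add: "f + g \<in> anc E \<Phi>" if f: "f \<in> anc E \<Phi>" and g: "g \<in> anc E \<Phi>" for f g
  proof (rule ancI)
    fix e assume e: "e \<in> E"
    show "anchor_set \<Phi> E (bracket E (e * (f + g)))"
    proof (rule key[OF ancD[OF f e], where N="\<lambda>a. bracket E ((a * e) * g)"])
      fix a assume a: "a \<in> bracket E (e * f)"
      thus "anchor_set \<Phi> E (bracket E (a * e * g))"
        using ancD[OF g] Emul e by (auto simp: bracket_def)
    next
      fix a b assume a: "a \<in> bracket E (e * f)" and b: "b \<in> bracket E (a * e * g)"
      have "b * a * (e * (f + g)) = b * (a * (e * f)) + b * (a * e * g)"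
        by (simp add: distrib_left mult.assoc)
      thus "b * a \<in> bracket E (e * (f + g))"
        using a b Emul Eadd by (auto simp: bracket_def)
    qed (auto simp: bracket_def mult z)
  qed
  have mul: "f * g \<in> anc E \<Phi>" if f: "f \<in> anc E \<Phi>" and g: "g \<in> anc E \<Phi>" for f g
  proof (rule ancI)
    fix e assume e: "e \<in> E"
    show "anchor_set \<Phi> E (bracket E (e * (f * g)))"
    proof (rule key[OF ancD[OF f e], where N="\<lambda>a. bracket E ((a * (e * f)) * g)"])
      fix a assume a: "a \<in> bracket E (e * f)"
      thus "anchor_set \<Phi> E (bracket E (a * (e * f) * g))"
        using ancD[OF g] by (auto simp: bracket_def)
    next
      fix a b assume a: "a \<in> bracket E (e * f)" and b: "b \<in> bracket E (a * (e * f) * g)"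
      have "b * a * (e * (f * g)) = b * (a * (e * f) * g)"
        by (simp add: mult.assoc)
      thus "b * a \<in> bracket E (e * (f * g))"
        using a b Emul by (auto simp: bracket_def)
    qed (auto simp: bracket_def mult z)
  qed
  have sc: "scF c f \<in> anc E \<Phi>" if f: "f \<in> anc E \<Phi>" for c f
  proof (cases "c = 0")
    case True
    then show ?thesis using zero module.scale_zero_left[OF md] by simp
  next
    case False
    show ?thesis
    proof (rule ancI)
      fix e assume e: "e \<in> E"
      have "bracket E (e * scF c f) = bracket E (e * f)"
      proof -
        have "h * (e * scF c f) \<in> E \<longleftrightarrow> h * (e * f) \<in> E" for h
        proof
          have eq: "h * (e * scF c f) = scF c (h * (e * f))" by (simp add: scm)
          show "h * (e * f) \<in> E" if "h * (e * scF c f) \<in> E"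
          proof -
            have "scF (inverse c) (scF c (h * (e * f))) \<in> E" using that eq Esc by simp
            thus ?thesis using False by (simp add: module.scale_scale[OF md] module.scale_one[OF md])
          qed
          show "h * (e * scF c f) \<in> E" if "h * (e * f) \<in> E" using that eq Esc by simp
        qed
        thus ?thesis by (auto simp: bracket_def)
      qed
      thus "anchor_set \<Phi> E (bracket E (e * scF c f))" using ancD[OF f e] by simp
    qed
  qed
  have anch: "anchored_set \<Phi> E (anc E \<Phi>)"
    unfolding anchored_set_def anchored_def
  proof
    fix f assume f: "f \<in> anc E \<Phi>"
    show "anchor_set \<Phi> E (bracket E f)"
    proof (rule key[OF nd, where N="\<lambda>a. bracket E (a * f)"])
      fix a assume "a \<in> E" thus "anchor_set \<Phi> E (bracket E (a * f))" using ancD[OF f] by simp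
    next
      fix a b assume "a \<in> E" "b \<in> bracket E (a * f)"
      thus "b * a \<in> bracket E f" using Emul by (auto simp: bracket_def mult.assoc)
    qed (auto simp: bracket_def mult z)
  qed
  have maxi: "A \<subseteq> anc E \<Phi>" if A: "unital_subalgebra scF A" "E \<subseteq> A" "anchored_set \<Phi> E A" for A
  proof
    fix f assume f: "f \<in> A"
    show "f \<in> anc E \<Phi>"
    proof (rule ancI)
      fix e assume "e \<in> E"
      hence "e * f \<in> A" using A f by (auto simp: unital_subalgebra_def subalgebra_def)
      thus "anchor_set \<Phi> E (bracket E (e * f))" using A(3) by (auto simp: anchored_set_def anchored_def)
    qed
  qed
  show ?thesis
    using zero one add mul sc sub anch maxi
    by (auto simp: unital_subalgebra_def subalgebra_def)
qed

end
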